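(* Let $(\Lambda,d)$ be a finitely aligned $k$-graph and let $(\overline{\Lambda},\overline d)$ be its extension as described in the context. Then for all $\lambda,\mu\in\Lambda$, $\Lambda^{\min}(\lambda,\mu)=\overline{\Lambda}^{\min}(\lambda,\mu)$.
   Context: A $k$-graph $(\Lambda,d)$ is a countable category with a degree functor $d:\Lambda\to\mathbb{N}^k$ satisfying unique factorization; $\Lambda^0$ vertices, $r,s$ range/source, $v\Lambda^n=\{\lambda:r(\lambda)=v,d(\lambda)=n\}$; $e_i$ standard basis, $\le$ coordinatewise, $\vee,\wedge$ coordinatewise max/min. For a $k$-graph $\Gamma$ and $\lambda,\mu\in\Gamma$, $\Gamma^{\min}(\lambda,\mu)=\{(\alpha,\beta)\in\Gamma\times\Gamma:\lambda\alpha=\mu\beta,\ d(\lambda\alpha)=d(\lambda)\vee d(\mu)\}$; $\Gamma$ is finitely aligned if all these sets are finite. For $m\in(\mathbb{N}\cup\{\infty\})^k$, $\Omega_{k,m}$ has objects $\{p\in\mathbb{N}^k:p\le m\}$, morphisms $(p,q)$, $p\le q\le m$, $r(p,q)=p$, $s(p,q)=q$, $d(p,q)=q-p$. A graph morphism $x:\Omega_{k,m}\to\Lambda$ is a degree-preserving functor; $d(x)=m$, $x(a,b)=x((a,b))$, $x(a)=x(a,a)$. It is a boundary path if there is $n_x\in\mathbb{N}^k$, $n_x\le d(x)$, with $x(p)\Lambda^{e_i}=\emptyset$ whenever $p\in\mathbb{N}^k$, $n_x\le p\le d(x)$, $p_i=d(x)_i$; $\Lambda^{\le\infty}$ is the set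 of boundary paths. $\sigma^px(a,b)=x(a+p,b+p)$; $\lambda x$ is the concatenation of $\lambda$ and $x$. $V_\Lambda=\{(x;m):x\in\Lambda^{\le\infty},m\in\mathbb{N}^k,m\not\le d(x)\}$, $(x;m)\approx(y;p)$ iff $x(m\wedge d(x))=y(p\wedge d(y))$ and $m-m\wedge d(x)=p-p\wedge d(y)$; classes $[x;m]$ form $\widetilde{V_\Lambda}$. $P_\Lambda=\{(x;(m,n)):x\in\Lambda^{\le\infty},m\le n\in\mathbb{N}^k,n\not\le d(x)\}$, $(x;(m,n))\sim(y;(p,q))$ iff $x(m\wedge d(x),n\wedge d(x))=y(p\wedge d(y),q\wedge d(y))$, $m-m\wedge d(x)=p-p\wedge d(y)$, $n-m=q-p$; classes $[x;(m,n)]$ form $\widetilde{P_\Lambda}$. The extension $\overline{\Lambda}$ is the $k$-graph with objects $\Lambda^0\sqcup\widetilde{V_\Lambda}$ and morphisms $\Lambda\sqcup\widetilde{P_\Lambda}$: on $\Lambda$ everything is as in $\Lambda$; $\overline r([x;(m,n)])=x(m)$ if $m\le d(x)$, else $[x;m]$; $\overline s([x;(m,n)])=[x;n]$; identity at $[x;m]$ is $[x;(m,m)]$; $\lambda[x;(m,n)]=[\lambda\sigma^mx;(0,d(\lambda)+n-m)]$; $[x;(m,n)][y;(p,q)]=[z;(m,n+q-p)]$ with $z=x(0,n\wedge d(x))\sigma^{p\wedge d(y)}y$; degree $\overline d|_\Lambda=d$, $\overline d([x;(m,n)])=n-m$. *)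

theory Defs
  imports Main "HOL-Library.Extended_Nat" "HOL-Library.Countable_Set"
begin

text \<open>Degrees in N^k are functions 'k => nat for a finite index type 'k
  (k = CARD('k)); degrees in (N u {oo})^k are functions 'k => enat.
  A k-graph is recorded as a small category with objects, morphisms,
  range, source, composition (cmp a b = "a b" with src a = rng b),
  identities and a degree functor.\<close>

record ('o, 'm, 'k) kgraph =
  obj :: "'o set"
  mor :: "'m set"
  rng :: "'m \<Rightarrow> 'o"
  src :: "'m \<Rightarrow> 'o"
  cmp :: "'m \<Rightarrow> 'm \<Rightarrow> 'm"
  ident :: "'o \<Rightarrow> 'm"
  deg :: "'m \<Rightarrow> 'k \<Rightarrow> nat"

definition padd :: "('k \<Rightarrow> nat) \<Rightarrow> ('k \<Rightarrow> nat) \<Rightarrow> 'k \<Rightarrow> nat" where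
  "padd p q = (\<lambda>i. p i + q i)"

definition psub :: "('k \<Rightarrow> nat) \<Rightarrow> ('k \<Rightarrow> nat) \<Rightarrow> 'k \<Rightarrow> nat" where
  "psub p q = (\<lambda>i. p i - q i)"

definition ofn :: "('k \<Rightarrow> nat) \<Rightarrow> 'k \<Rightarrow> enat" where
  "ofn p = (\<lambda>i. enat (p i))"

definition ev :: "'k \<Rightarrow> 'k \<Rightarrow> nat" where
  "ev i = (\<lambda>j. if j = i then 1 else 0)"

definition is_kgraph :: "('o, 'm, 'k::finite) kgraph \<Rightarrow> bool" where
  "is_kgraph G \<longleftrightarrow>
     countable (obj G) \<and> countable (mor G) \<and>
     (\<forall>a\<in>mor G. rng G a \<in> obj G \<and> src G a \<in> obj G) \<and>
     (\<forall>v\<in>obj G. ident G v \<in> mor G \<and> rng G (ident G v) = v \<and> src G (ident G v) = v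
                 \<and> deg G (ident G v) = (\<lambda>_. 0)) \<and>
     (\<forall>a\<in>mor G. cmp G (ident G (rng G a)) a = a \<and> cmp G a (ident G (src G a)) = a) \<and>
     (\<forall>a\<in>mor G. \<forall>b\<in>mor G. src G a = rng G b \<longrightarrow>
        cmp G a b \<in> mor G \<and> rng G (cmp G a b) = rng G a \<and> src G (cmp G a b) = src G b
        \<and> deg G (cmp G a b) = padd (deg G a) (deg G b)) \<and>
     (\<forall>a\<in>mor G. \<forall>b\<in>mor G. \<forall>c\<in>mor G. src G a = rng G b \<and> src G b = rng G c \<longrightarrow>
        cmp G (cmp G a b) c = cmp G a (cmp G b c)) \<and>
     (\<forall>l\<in>mor G. \<forall>m n. deg G l = padd m n \<longrightarrow>
        (\<exists>!ab. fst ab \<in> mor G \<and> snd ab \<in> mor G \<and> src G (fst ab) = rng G (snd ab)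
               \<and> deg G (fst ab) = m \<and> deg G (snd ab) = n \<and> cmp G (fst ab) (snd ab) = l))"

definition kmin :: "('o, 'm, 'k) kgraph \<Rightarrow> 'm \<Rightarrow> 'm \<Rightarrow> ('m \<times> 'm) set" where
  "kmin G l u = {(a, b). a \<in> mor G \<and> b \<in> mor G \<and> src G l = rng G a \<and> src G u = rng G b
      \<and> cmp G l a = cmp G u b \<and> deg G (cmp G l a) = sup (deg G l) (deg G u)}"

definition finitely_aligned :: "('o, 'm, 'k) kgraph \<Rightarrow> bool" where
  "finitely_aligned G \<longleftrightarrow> (\<forall>l\<in>mor G. \<forall>u\<in>mor G. finite (kmin G l u))"

text \<open>A graph morphism x : Omega_{k,m} -> Lambda is a pair (degree m, map on
  morphisms (p,q) of Omega_{k,m}); the map is normalised to undefined outside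
  the domain so that graph morphisms are determined by their values.\<close>
type_synonym ('k, 'm) gpath = "('k \<Rightarrow> enat) \<times> (('k \<Rightarrow> nat) \<times> ('k \<Rightarrow> nat) \<Rightarrow> 'm)"

definition dg :: "('k, 'm) gpath \<Rightarrow> 'k \<Rightarrow> enat" where "dg x = fst x"
definition seg :: "('k, 'm) gpath \<Rightarrow> ('k \<Rightarrow> nat) \<Rightarrow> ('k \<Rightarrow> nat) \<Rightarrow> 'm" where
  "seg x p q = snd x (p, q)"
definition vtx :: "('o, 'm, 'k) kgraph \<Rightarrow> ('k, 'm) gpath \<Rightarrow> ('k \<Rightarrow> nat) \<Rightarrow> 'o" where
  "vtx G x p = rng G (seg x p p)"

definition is_gmor :: "('o, 'm, 'k) kgraph \<Rightarrow> ('k, 'm) gpath \<Rightarrow> bool" where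
  "is_gmor G x \<longleftrightarrow>
     (\<forall>p q. \<not> (p \<le> q \<and> ofn q \<le> dg x) \<longrightarrow> seg x p q = undefined) \<and>
     (\<forall>p q. p \<le> q \<and> ofn q \<le> dg x \<longrightarrow> seg x p q \<in> mor G \<and> deg G (seg x p q) = psub q p) \<and>
     (\<forall>p. ofn p \<le> dg x \<longrightarrow> seg x p p = ident G (vtx G x p)) \<and>
     (\<forall>p q t. p \<le> q \<and> q \<le> t \<and> ofn t \<le> dg x \<longrightarrow>
        src G (seg x p q) = rng G (seg x q t) \<and> cmp G (seg x p q) (seg x q t) = seg x p t)"

definition is_bpath :: "('o, 'm, 'k) kgraph \<Rightarrow> ('k, 'm) gpath \<Rightarrow> bool" where
  "is_bpath G x \<longleftrightarrow> is_gmor G x \<and>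
     (\<exists>nx. ofn nx \<le> dg x \<and>
        (\<forall>p i. nx \<le> p \<and> ofn p \<le> dg x \<and> enat (p i) = dg x i \<longrightarrow>
           \<not> (\<exists>l\<in>mor G. rng G l = vtx G x p \<and> deg G l = ev i)))"

definition sh :: "('k \<Rightarrow> nat) \<Rightarrow> ('k, 'm) gpath \<Rightarrow> ('k, 'm) gpath" where
  "sh p x = ((\<lambda>i. dg x i - enat (p i)),
             (\<lambda>(a, b). if a \<le> b \<and> ofn b \<le> (\<lambda>i. dg x i - enat (p i))
                       then seg x (padd a p) (padd b p) else undefined))"

definition concat :: "('o, 'm, 'k) kgraph \<Rightarrow> 'm \<Rightarrow> ('k, 'm) gpath \<Rightarrow> ('k, 'm) gpath" where
  "concat G l y = (THE z. is_gmor G z \<and> dg z = (\<lambda>i. enat (deg G l i) + dg y i)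
                      \<and> seg z (\<lambda>_. 0) (deg G l) = l \<and> sh (deg G l) z = y)"

definition mn :: "('k \<Rightarrow> nat) \<Rightarrow> ('k \<Rightarrow> enat) \<Rightarrow> 'k \<Rightarrow> nat" where
  "mn n D = (\<lambda>i. the_enat (min (enat (n i)) (D i)))"

definition Vset :: "('o, 'm, 'k) kgraph \<Rightarrow> (('k, 'm) gpath \<times> ('k \<Rightarrow> nat)) set" where
  "Vset G = {(x, m). is_bpath G x \<and> \<not> ofn m \<le> dg x}"

definition classV :: "('o, 'm, 'k) kgraph \<Rightarrow> ('k, 'm) gpath \<Rightarrow> ('k \<Rightarrow> nat)
                      \<Rightarrow> (('k, 'm) gpath \<times> ('k \<Rightarrow> nat)) set" where
  "classV G x m = {(y, p) \<in> Vset G. vtx G x (mn m (dg x)) = vtx G y (mn p (dg y))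
                     \<and> psub m (mn m (dg x)) = psub p (mn p (dg y))}"

definition Vt :: "('o, 'm, 'k) kgraph \<Rightarrow> (('k, 'm) gpath \<times> ('k \<Rightarrow> nat)) set set" where
  "Vt G = {classV G x m | x m. (x, m) \<in> Vset G}"

definition Pset :: "('o, 'm, 'k) kgraph
                    \<Rightarrow> (('k, 'm) gpath \<times> ('k \<Rightarrow> nat) \<times> ('k \<Rightarrow> nat)) set" where
  "Pset G = {(x, m, n). is_bpath G x \<and> m \<le> n \<and> \<not> ofn n \<le> dg x}"

definition classP :: "('o, 'm, 'k) kgraph \<Rightarrow> ('k, 'm) gpath \<Rightarrow> ('k \<Rightarrow> nat) \<Rightarrow> ('k \<Rightarrow> nat)
                      \<Rightarrow> (('k, 'm) gpath \<times> ('k \<Rightarrow> nat) \<times> ('k \<Rightarrow> nat)) set" where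
  "classP G x m n = {(y, p, q) \<in> Pset G.
       seg x (mn m (dg x)) (mn n (dg x)) = seg y (mn p (dg y)) (mn q (dg y))
     \<and> psub m (mn m (dg x)) = psub p (mn p (dg y))
     \<and> psub n m = psub q p}"

definition Pt :: "('o, 'm, 'k) kgraph
                  \<Rightarrow> (('k, 'm) gpath \<times> ('k \<Rightarrow> nat) \<times> ('k \<Rightarrow> nat)) set set" where
  "Pt G = {classP G x m n | x m n. (x, m, n) \<in> Pset G}"

text \<open>operations on classes are computed on a chosen representative
  (well-definedness is part of the paper's construction)\<close>
definition rep :: "'a set \<Rightarrow> 'a" where "rep C = (SOME q. q \<in> C)"

definition ext :: "('o, 'm, 'k::finite) kgraph \<Rightarrow>
   ('o + (('k, 'm) gpath \<times> ('k \<Rightarrow> nat)) set,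
    'm + (('k, 'm) gpath \<times> ('k \<Rightarrow> nat) \<times> ('k \<Rightarrow> nat)) set, 'k) kgraph" where
  "ext G = \<lparr>
     obj = Inl ` obj G \<union> Inr ` Vt G,
     mor = Inl ` mor G \<union> Inr ` Pt G,
     rng = (\<lambda>u. case u of
              Inl l \<Rightarrow> Inl (rng G l)
            | Inr C \<Rightarrow> (case rep C of (x, m, n) \<Rightarrow>
                 if ofn m \<le> dg x then Inl (vtx G x m) else Inr (classV G x m))),
     src = (\<lambda>u. case u of
              Inl l \<Rightarrow> Inl (src G l)
            | Inr C \<Rightarrow> (case rep C of (x, m, n) \<Rightarrow> Inr (classV G x n))),
     cmp = (\<lambda>u v. case (u, v) of
              (Inl a, Inl b) \<Rightarrow> Inl (cmp G a b)
            | (Inl l, Inr C) \<Rightarrow> (case rep C of (x, m, n) \<Rightarrow>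
                 Inr (classP G (concat G l (sh m x)) (\<lambda>_. 0) (psub (padd (deg G l) n) m)))
            | (Inr C, Inr D) \<Rightarrow> (case rep C of (x, m, n) \<Rightarrow> (case rep D of (y, p, q) \<Rightarrow>
                 Inr (classP G (concat G (seg x (\<lambda>_. 0) (mn n (dg x))) (sh (mn p (dg y)) y))
                        m (psub (padd n q) p))))
            | (Inr C, Inl b) \<Rightarrow> undefined),
     ident = (\<lambda>w. case w of
              Inl v \<Rightarrow> Inl (ident G v)
            | Inr V \<Rightarrow> (case rep V of (x, m) \<Rightarrow> Inr (classP G x m m))),
     deg = (\<lambda>u. case u of
              Inl l \<Rightarrow> deg G l
            | Inr C \<Rightarrow> (case rep C of (x, m, n) \<Rightarrow> psub n m)) \<rparr>"

end

theory Submission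
  imports Defs
begin

locale kg =
  fixes G :: "('o, 'm, 'k::finite) kgraph"
  assumes KG: "is_kgraph G"
begin

lemma rs_obj: "a \<in> mor G \<Longrightarrow> rng G a \<in> obj G \<and> src G a \<in> obj G"
  using KG unfolding is_kgraph_def by blast

lemma ident_props: "v \<in> obj G \<Longrightarrow> ident G v \<in> mor G \<and> rng G (ident G v) = v \<and> src G (ident G v) = v
                 \<and> deg G (ident G v) = (\<lambda>_. 0)"
  using KG unfolding is_kgraph_def by blast

lemma idl: "a \<in> mor G \<Longrightarrow> cmp G (ident G (rng G a)) a = a"
  using KG unfolding is_kgraph_def by blast
lemma idr: "a \<in> mor G \<Longrightarrow> cmp G a (ident G (src G a)) = a"
  using KG unfolding is_kgraph_def by blast

lemma cmp_props: "a \<in> mor G \<Longrightarrow> b \<in> mor G \<Longrightarrow> src G a = rng G b \<Longrightarrow>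
        cmp G a b \<in> mor G \<and> rng G (cmp G a b) = rng G a \<and> src G (cmp G a b) = src G b
        \<and> deg G (cmp G a b) = padd (deg G a) (deg G b)"
  using KG unfolding is_kgraph_def by blast

lemma cmp_mor[simp]: "a \<in> mor G \<Longrightarrow> b \<in> mor G \<Longrightarrow> src G a = rng G b \<Longrightarrow> cmp G a b \<in> mor G"
  using cmp_props by blast
lemma cmp_rng[simp]: "a \<in> mor G \<Longrightarrow> b \<in> mor G \<Longrightarrow> src G a = rng G b \<Longrightarrow> rng G (cmp G a b) = rng G a"
  using cmp_props by blast
lemma cmp_src[simp]: "a \<in> mor G \<Longrightarrow> b \<in> mor G \<Longrightarrow> src G a = rng G b \<Longrightarrow> src G (cmp G a b) = src G b"
  using cmp_props by blast
lemma cmp_deg[simp]: "a \<in> mor G \<Longrightarrow> b \<in> mor G \<Longrightarrow> src G a = rng G b \<Longrightarrow> deg G (cmp G a b) = padd (deg G a) (deg G b)"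
  using cmp_props by blast

lemma assoc: "a \<in> mor G \<Longrightarrow> b \<in> mor G \<Longrightarrow> c \<in> mor G \<Longrightarrow> src G a = rng G b \<Longrightarrow> src G b = rng G c \<Longrightarrow>
        cmp G (cmp G a b) c = cmp G a (cmp G b c)"
  using KG unfolding is_kgraph_def by blast

lemma uf: "l \<in> mor G \<Longrightarrow> deg G l = padd m n \<Longrightarrow>
        (\<exists>!ab. fst ab \<in> mor G \<and> snd ab \<in> mor G \<and> src G (fst ab) = rng G (snd ab)
               \<and> deg G (fst ab) = m \<and> deg G (snd ab) = n \<and> cmp G (fst ab) (snd ab) = l)"
  using KG unfolding is_kgraph_def by blast

lemma fact_ex: "l \<in> mor G \<Longrightarrow> deg G l = padd m n \<Longrightarrow>
   \<exists>a b. a \<in> mor G \<and> b \<in> mor G \<and> src G a = rng G b \<and> deg G a = m \<and> deg G b = n \<and> cmp G a b = l"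
  using uf[of l m n] by (metis fst_conv snd_conv)

lemma fact_uniq: "a \<in> mor G \<Longrightarrow> b \<in> mor G \<Longrightarrow> a' \<in> mor G \<Longrightarrow> b' \<in> mor G \<Longrightarrow>
   src G a = rng G b \<Longrightarrow> src G a' = rng G b' \<Longrightarrow> deg G a = deg G a' \<Longrightarrow> deg G b = deg G b' \<Longrightarrow>
   cmp G a b = cmp G a' b' \<Longrightarrow> a = a' \<and> b = b'"
proof -
  assume h: "a \<in> mor G" "b \<in> mor G" "a' \<in> mor G" "b' \<in> mor G"
   "src G a = rng G b" "src G a' = rng G b'" "deg G a = deg G a'" "deg G b = deg G b'"
   "cmp G a b = cmp G a' b'"
  have "\<exists>!ab. fst ab \<in> mor G \<and> snd ab \<in> mor G \<and> src G (fst ab) = rng G (snd ab)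
               \<and> deg G (fst ab) = deg G a \<and> deg G (snd ab) = deg G b \<and> cmp G (fst ab) (snd ab) = cmp G a b"
    using uf[of "cmp G a b" "deg G a" "deg G b"] h by simp
  then have "(a, b) = (a', b')" using h by (metis (mono_tags, lifting) fst_conv snd_conv)
  then show ?thesis by simp
qed

lemma deg0_ident: "c \<in> mor G \<Longrightarrow> deg G c = (\<lambda>_. 0) \<Longrightarrow> c = ident G (rng G c)"
proof -
  assume c: "c \<in> mor G" "deg G c = (\<lambda>_. 0)"
  have o: "rng G c \<in> obj G" "src G c \<in> obj G" using rs_obj c by auto
  show ?thesis
    using fact_uniq[of "ident G (rng G c)" c c "ident G (src G c)"] ident_props[OF o(1)] ident_props[OF o(2)]
      c idl idr by auto
qed

end

lemma padd_psub: "(p::'k \<Rightarrow> nat) \<le> q \<Longrightarrow> padd p (psub q p) = q"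
  by (auto simp: padd_def psub_def le_fun_def fun_eq_iff)
lemma padd_comm: "padd p q = padd q p"
  by (auto simp: padd_def fun_eq_iff)
lemma padd_assoc: "padd (padd p q) r = padd p (padd q r)"
  by (auto simp: padd_def fun_eq_iff)
lemma psub_0[simp]: "psub p (\<lambda>_. 0) = p"
  by (auto simp: psub_def fun_eq_iff)
lemma padd_0[simp]: "padd (\<lambda>_. 0) p = p" "padd p (\<lambda>_. 0) = p"
  by (auto simp: padd_def fun_eq_iff)
lemma psub_self[simp]: "psub p p = (\<lambda>_. 0)"
  by (auto simp: psub_def fun_eq_iff)
lemma zero_le[simp]: "(\<lambda>_. 0::nat) \<le> p"
  by (auto simp: le_fun_def)
lemma ofn_mono: "p \<le> q \<Longrightarrow> ofn p \<le> ofn q"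
  by (auto simp: ofn_def le_fun_def)

context kg
begin

definition pseg :: "'m \<Rightarrow> ('k \<Rightarrow> nat) \<Rightarrow> ('k \<Rightarrow> nat) \<Rightarrow> 'm" where
  "pseg w p q = (THE c. \<exists>a b. a \<in> mor G \<and> b \<in> mor G \<and> c \<in> mor G \<and> src G a = rng G c \<and> src G c = rng G b
     \<and> deg G a = p \<and> deg G c = psub q p \<and> deg G b = psub (deg G w) q \<and> cmp G (cmp G a c) b = w)"

lemma pseg_char:
  assumes "a \<in> mor G" "b \<in> mor G" "c \<in> mor G" "src G a = rng G c" "src G c = rng G b"
     "deg G a = p" "deg G c = psub q p" "deg G b = psub (deg G w) q" "cmp G (cmp G a c) b = w"
  shows "pseg w p q = c"
  unfolding pseg_def
proof (rule the_equality)
  show "\<exists>a b. a \<in> mor G \<and> b \<in> mor G \<and> c \<in> mor G \<and> src G a = rng G c \<and> src G c = rng G b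
     \<and> deg G a = p \<and> deg G c = psub q p \<and> deg G b = psub (deg G w) q \<and> cmp G (cmp G a c) b = w"
    using assms by blast
next
  fix c' assume "\<exists>a b. a \<in> mor G \<and> b \<in> mor G \<and> c' \<in> mor G \<and> src G a = rng G c' \<and> src G c' = rng G b
     \<and> deg G a = p \<and> deg G c' = psub q p \<and> deg G b = psub (deg G w) q \<and> cmp G (cmp G a c') b = w"
  then obtain a' b' where h: "a' \<in> mor G" "b' \<in> mor G" "c' \<in> mor G" "src G a' = rng G c'" "src G c' = rng G b'"
     "deg G a' = p" "deg G c' = psub q p" "deg G b' = psub (deg G w) q" "cmp G (cmp G a' c') b' = w" by blast
  have "cmp G a c = cmp G a' c' \<and> b = b'"
    by (rule fact_uniq) (use assms h in auto)
  then have "a = a' \<and> c = c'"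
    by (intro fact_uniq) (use assms h in auto)
  then show "c' = c" by simp
qed

lemma pseg_ex:
  assumes w: "w \<in> mor G" and pq: "p \<le> q" "q \<le> deg G w"
  shows "\<exists>a b. a \<in> mor G \<and> b \<in> mor G \<and> pseg w p q \<in> mor G \<and> src G a = rng G (pseg w p q)
     \<and> src G (pseg w p q) = rng G b
     \<and> deg G a = p \<and> deg G (pseg w p q) = psub q p \<and> deg G b = psub (deg G w) q
     \<and> cmp G (cmp G a (pseg w p q)) b = w"
proof -
  obtain A b where Ab: "A \<in> mor G" "b \<in> mor G" "src G A = rng G b" "deg G A = q" "deg G b = psub (deg G w) q"
     "cmp G A b = w"
    using fact_ex[OF w, of q "psub (deg G w) q"] padd_psub[OF pq(2)] by auto
  obtain a c where ac: "a \<in> mor G" "c \<in> mor G" "src G a = rng G c" "deg G a = p" "deg G c = psub q p"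
     "cmp G a c = A"
    using fact_ex[OF Ab(1), of p "psub q p"] padd_psub[OF pq(1)] Ab(4) by auto
  have sc: "src G c = rng G b" using ac Ab cmp_src by metis
  have "pseg w p q = c" by (rule pseg_char[of a b]) (use Ab ac sc in auto)
  then show ?thesis using Ab ac sc by blast
qed

lemma pseg_mor:
  assumes "w \<in> mor G" "p \<le> q" "q \<le> deg G w"
  shows "pseg w p q \<in> mor G" "deg G (pseg w p q) = psub q p"
  using pseg_ex[OF assms] by auto

lemma pseg_comp:
  assumes w: "w \<in> mor G" and pq: "p \<le> q" "q \<le> t" "t \<le> deg G w"
  shows "src G (pseg w p q) = rng G (pseg w q t) \<and> cmp G (pseg w p q) (pseg w q t) = pseg w p t"
proof -
  have pt: "p \<le> t" using pq by auto
  obtain a b where h: "a \<in> mor G" "b \<in> mor G" "pseg w p t \<in> mor G" "src G a = rng G (pseg w p t)"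
     "src G (pseg w p t) = rng G b"
     "deg G a = p" "deg G (pseg w p t) = psub t p" "deg G b = psub (deg G w) t"
     "cmp G (cmp G a (pseg w p t)) b = w"
    using pseg_ex[OF w pt pq(3)] by blast
  define c where "c = pseg w p t"
  have dc: "deg G c = padd (psub q p) (psub t q)" using h(7) pq unfolding c_def
    by (auto simp: padd_def psub_def le_fun_def fun_eq_iff)
  obtain c1 c2 where cc: "c1 \<in> mor G" "c2 \<in> mor G" "src G c1 = rng G c2" "deg G c1 = psub q p"
     "deg G c2 = psub t q" "cmp G c1 c2 = c"
    using fact_ex[OF h(3)[folded c_def] dc] by blast
  have r1: "rng G c1 = rng G c" using cc cmp_rng by metis
  have s2: "src G c2 = src G c" using cc cmp_src by metis
  have sa: "src G a = rng G c1" using h(4) r1 c_def by simp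
  have sc2: "src G c2 = rng G b" using h(5) s2 c_def by simp
  have ac1: "cmp G a c1 \<in> mor G" "src G (cmp G a c1) = rng G c2" using h(1) cc sa by auto
  have c2b: "cmp G c2 b \<in> mor G" using cc h sc2 by auto
  have eq: "cmp G (cmp G (cmp G a c1) c2) b = w"
    using assoc[of a c1 c2] h(1) cc sa h(9) c_def by simp
  have e1: "pseg w p q = c1"
  proof (rule pseg_char[of a "cmp G c2 b"])
    show "cmp G (cmp G a c1) (cmp G c2 b) = w"
      using assoc[of "cmp G a c1" c2 b] ac1 cc h(2) sc2 eq by simp
    show "deg G (cmp G c2 b) = psub (deg G w) q"
      using h(2,8) cc sc2 pq by (simp add: padd_def psub_def le_fun_def fun_eq_iff)
    show "src G c1 = rng G (cmp G c2 b)" using cc h(2) sc2 by simp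
  qed (use h cc sa c2b in auto)
  have e2: "pseg w q t = c2"
  proof (rule pseg_char[of "cmp G a c1" b])
    show "deg G (cmp G a c1) = q"
      using h(1,6) cc sa pq by (simp add: padd_psub)
  qed (use h(2,8) cc ac1 sc2 eq in auto)
  show ?thesis using e1 e2 cc c_def by simp
qed

lemma pseg_idn:
  assumes "w \<in> mor G" "p \<le> deg G w"
  shows "pseg w p p = ident G (rng G (pseg w p p))"
  using pseg_mor[OF assms(1) _ assms(2)] deg0_ident by auto

lemma pseg_ext:
  assumes v: "v \<in> mor G" "e \<in> mor G" "src G v = rng G e" and pq: "p \<le> q" "q \<le> deg G v"
  shows "pseg (cmp G v e) p q = pseg v p q"
proof -
  obtain a b where h: "a \<in> mor G" "b \<in> mor G" "pseg v p q \<in> mor G" "src G a = rng G (pseg v p q)"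
     "src G (pseg v p q) = rng G b"
     "deg G a = p" "deg G (pseg v p q) = psub q p" "deg G b = psub (deg G v) q"
     "cmp G (cmp G a (pseg v p q)) b = v"
    using pseg_ex[OF v(1) pq] by blast
  have sb: "src G b = src G v" using h cmp_src by (metis cmp_mor)
  show ?thesis
  proof (rule pseg_char[of a "cmp G b e"])
    show "cmp G (cmp G a (pseg v p q)) (cmp G b e) = cmp G v e"
      using h v sb by (metis assoc cmp_mor cmp_src)
    show "deg G (cmp G b e) = psub (deg G (cmp G v e)) q"
      using h v sb pq by (simp add: padd_def psub_def le_fun_def fun_eq_iff)
  qed (use h v sb in auto)
qed

lemma pseg_shift:
  assumes v: "l \<in> mor G" "v \<in> mor G" "src G l = rng G v" and pq: "p \<le> q" "q \<le> deg G v"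
  shows "pseg (cmp G l v) (padd p (deg G l)) (padd q (deg G l)) = pseg v p q"
proof -
  obtain a b where h: "a \<in> mor G" "b \<in> mor G" "pseg v p q \<in> mor G" "src G a = rng G (pseg v p q)"
     "src G (pseg v p q) = rng G b"
     "deg G a = p" "deg G (pseg v p q) = psub q p" "deg G b = psub (deg G v) q"
     "cmp G (cmp G a (pseg v p q)) b = v"
    using pseg_ex[OF v(2) pq] by blast
  define c where "c = pseg v p q"
  note h = h[folded c_def]
  have ac: "cmp G a c \<in> mor G" "src G (cmp G a c) = rng G b" "rng G (cmp G a c) = rng G a"
    using h by auto
  have ra: "rng G v = rng G a" using h(9)[symmetric] ac h(2) by simp
  have la: "src G l = rng G a" using v(3) ra by simp
  have eq: "cmp G (cmp G (cmp G l a) c) b = cmp G l v"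
  proof -
    have "cmp G (cmp G l a) c = cmp G l (cmp G a c)" using assoc[of l a c] v(1) h(1,3,4) la by simp
    moreover have "cmp G l (cmp G (cmp G a c) b) = cmp G (cmp G l (cmp G a c)) b"
      using assoc[of l "cmp G a c" b] v(1) h(2) ac la by simp
    ultimately show ?thesis using h(9) by simp
  qed
  have "pseg (cmp G l v) (padd p (deg G l)) (padd q (deg G l)) = c"
  proof (rule pseg_char[of "cmp G l a" b])
    show "cmp G (cmp G (cmp G l a) c) b = cmp G l v" by (rule eq)
    show "deg G (cmp G l a) = padd p (deg G l)"
      using h(1,6) v(1) la by (simp add: padd_comm)
    show "deg G c = psub (padd q (deg G l)) (padd p (deg G l))"
      using h(7) by (simp add: padd_def psub_def fun_eq_iff)
    show "deg G b = psub (deg G (cmp G l v)) (padd q (deg G l))"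
      using h(8) v by (simp add: padd_def psub_def fun_eq_iff)
    show "cmp G l a \<in> mor G" using v(1) h(1) la by simp
    show "src G (cmp G l a) = rng G c" using v(1) h(1,4) la by simp
  qed (use h in auto)
  then show ?thesis using c_def by simp
qed

lemma pseg_full:
  assumes w: "w \<in> mor G" shows "pseg w (\<lambda>_. 0) (deg G w) = w"
proof -
  have o: "rng G w \<in> obj G" "src G w \<in> obj G" using rs_obj assms by auto
  note i1 = ident_props[OF o(1)] and i2 = ident_props[OF o(2)]
  have e: "cmp G (cmp G (ident G (rng G w)) w) (ident G (src G w)) = w"
    using idl[OF w] idr[OF w] by simp
  show ?thesis
  proof (rule pseg_char[of "ident G (rng G w)" "ident G (src G w)"])
    show "deg G (ident G (src G w)) = psub (deg G w) (deg G w)" using i2 by simp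
  qed (use w i1 i2 e in simp_all)
qed

lemma enat_sub_le: "enat m \<le> D \<Longrightarrow> (enat b \<le> D - enat m) = (enat (b + m) \<le> D)"
  by (cases D) auto

lemma ofn_sh_iff: "ofn m \<le> D \<Longrightarrow> (ofn b \<le> (\<lambda>i. D i - enat (m i))) = (ofn (padd b m) \<le> D)"
  by (auto simp: ofn_def le_fun_def padd_def enat_sub_le)

lemma gm_undef: "is_gmor G x \<Longrightarrow> \<not> (p \<le> q \<and> ofn q \<le> dg x) \<Longrightarrow> seg x p q = undefined"
  by (drule iffD1[OF is_gmor_def], drule conjunct1) blast
lemma gm_mor: "is_gmor G x \<Longrightarrow> p \<le> q \<Longrightarrow> ofn q \<le> dg x \<Longrightarrow> seg x p q \<in> mor G \<and> deg G (seg x p q) = psub q p"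
  by (drule iffD1[OF is_gmor_def], drule conjunct2, drule conjunct1) blast
lemma gm_id: "is_gmor G x \<Longrightarrow> ofn p \<le> dg x \<Longrightarrow> seg x p p = ident G (vtx G x p)"
  by (drule iffD1[OF is_gmor_def], drule conjunct2, drule conjunct2, drule conjunct1) blast
lemma gm_comp: "is_gmor G x \<Longrightarrow> p \<le> q \<Longrightarrow> q \<le> t \<Longrightarrow> ofn t \<le> dg x \<Longrightarrow>
        src G (seg x p q) = rng G (seg x q t) \<and> cmp G (seg x p q) (seg x q t) = seg x p t"
  by (drule iffD1[OF is_gmor_def], drule conjunct2, drule conjunct2, drule conjunct2) blast

lemma gm_src: "is_gmor G x \<Longrightarrow> p \<le> q \<Longrightarrow> ofn q \<le> dg x \<Longrightarrow> src G (seg x p q) = vtx G x q"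
  using gm_comp[of x p q q] unfolding vtx_def by auto

lemma gm_rng: "is_gmor G x \<Longrightarrow> p \<le> q \<Longrightarrow> ofn q \<le> dg x \<Longrightarrow> rng G (seg x p q) = vtx G x p"
proof -
  assume x: "is_gmor G x" "p \<le> q" "ofn q \<le> dg x"
  have pd: "ofn p \<le> dg x" using order_trans[OF ofn_mono[OF x(2)] x(3)] .
  have "seg x p p \<in> mor G" using gm_mor[OF x(1) order_refl pd] by simp
  then have o: "vtx G x p \<in> obj G" using rs_obj unfolding vtx_def by blast
  have "src G (seg x p p) = rng G (seg x p q)" using gm_comp[OF x(1) order_refl x(2) x(3)] by simp
  then show ?thesis using gm_id[OF x(1) pd] ident_props[OF o] by simp
qed

lemma gseg:
  assumes x: "is_gmor G x" and pq: "p \<le> q" "q \<le> Q" "ofn Q \<le> dg x"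
  shows "pseg (seg x (\<lambda>_. 0) Q) p q = seg x p q"
proof -
  have qd: "ofn q \<le> dg x" using order_trans[OF ofn_mono[OF pq(2)] pq(3)] .
  have pd: "ofn p \<le> dg x" using order_trans[OF ofn_mono[OF pq(1)] qd] .
  have m1: "seg x (\<lambda>_. 0) p \<in> mor G" "deg G (seg x (\<lambda>_. 0) p) = p" using gm_mor[OF x _ pd] by auto
  have m2: "seg x p q \<in> mor G" "deg G (seg x p q) = psub q p" using gm_mor[OF x pq(1) qd] by auto
  have m3: "seg x q Q \<in> mor G" "deg G (seg x q Q) = psub Q q" using gm_mor[OF x pq(2) pq(3)] by auto
  have m4: "deg G (seg x (\<lambda>_. 0) Q) = Q" using gm_mor[OF x _ pq(3)] by auto
  have c1: "src G (seg x (\<lambda>_. 0) p) = rng G (seg x p q) \<and> cmp G (seg x (\<lambda>_. 0) p) (seg x p q) = seg x (\<lambda>_. 0) q"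
    using gm_comp[OF x _ pq(1) qd] by simp
  have c2: "src G (seg x (\<lambda>_. 0) q) = rng G (seg x q Q) \<and> cmp G (seg x (\<lambda>_. 0) q) (seg x q Q) = seg x (\<lambda>_. 0) Q"
    using gm_comp[OF x _ pq(2) pq(3)] by simp
  have c3: "src G (seg x p q) = rng G (seg x q Q)" using gm_comp[OF x pq(1) pq(2) pq(3)] by simp
  show ?thesis
  proof (rule pseg_char[of "seg x (\<lambda>_. 0) p" "seg x q Q"])
    show "cmp G (cmp G (seg x (\<lambda>_. 0) p) (seg x p q)) (seg x q Q) = seg x (\<lambda>_. 0) Q"
      using c1 c2 by simp
    show "deg G (seg x q Q) = psub (deg G (seg x (\<lambda>_. 0) Q)) q" using m3 m4 by simp
  qed (use m1 m2 m3 c1 c3 in blast)+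
qed

lemma dg_sh: "dg (sh m x) = (\<lambda>i. dg x i - enat (m i))"
  by (simp add: sh_def dg_def)

lemma seg_sh: "seg (sh m x) a b = (if a \<le> b \<and> ofn b \<le> dg (sh m x) then seg x (padd a m) (padd b m) else undefined)"
  by (simp add: sh_def seg_def dg_def)

lemma vtx_sh: "vtx G (sh m x) p = (if ofn p \<le> dg (sh m x) then vtx G x (padd p m) else rng G undefined)"
  by (simp add: vtx_def seg_sh)

lemma padd_mono: "(a::'k\<Rightarrow>nat) \<le> b \<Longrightarrow> padd a m \<le> padd b m"
  by (auto simp: padd_def le_fun_def)

lemma sh_gmor:
  assumes x: "is_gmor G x" and m: "ofn m \<le> dg x"
  shows "is_gmor G (sh m x)"
proof -
  have iff: "\<And>b. ofn b \<le> dg (sh m x) \<longleftrightarrow> ofn (padd b m) \<le> dg x"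
    using ofn_sh_iff[OF m] unfolding dg_sh by blast
  have f1: "\<forall>p q. \<not> (p \<le> q \<and> ofn q \<le> dg (sh m x)) \<longrightarrow> seg (sh m x) p q = undefined"
    by (metis seg_sh)
  have f2: "\<forall>p q. p \<le> q \<and> ofn q \<le> dg (sh m x) \<longrightarrow> seg (sh m x) p q \<in> mor G \<and> deg G (seg (sh m x) p q) = psub q p"
  proof (intro allI impI)
    fix p q assume h: "p \<le> q \<and> ofn q \<le> dg (sh m x)"
    then have a: "padd p m \<le> padd q m" "ofn (padd q m) \<le> dg x" using iff padd_mono by auto
    have b: "seg x (padd p m) (padd q m) \<in> mor G \<and> deg G (seg x (padd p m) (padd q m)) = psub (padd q m) (padd p m)"
      using gm_mor[OF x a] .
    have c: "psub (padd q m) (padd p m) = psub q p" by (auto simp: psub_def padd_def fun_eq_iff)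
    have d: "seg (sh m x) p q = seg x (padd p m) (padd q m)" using h by (simp add: seg_sh)
    show "seg (sh m x) p q \<in> mor G \<and> deg G (seg (sh m x) p q) = psub q p"
      using b c d by simp
  qed
  have f3: "\<forall>p. ofn p \<le> dg (sh m x) \<longrightarrow> seg (sh m x) p p = ident G (vtx G (sh m x) p)"
  proof (intro allI impI)
    fix p assume h: "ofn p \<le> dg (sh m x)"
    have d: "seg (sh m x) p p = seg x (padd p m) (padd p m)" using h by (simp add: seg_sh)
    have v: "vtx G (sh m x) p = vtx G x (padd p m)" using h by (simp add: vtx_sh)
    show "seg (sh m x) p p = ident G (vtx G (sh m x) p)"
      using gm_id[OF x iff[THEN iffD1, OF h]] d v by simp
  qed
  have f4: "\<forall>p q t. p \<le> q \<and> q \<le> t \<and> ofn t \<le> dg (sh m x) \<longrightarrow>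
        src G (seg (sh m x) p q) = rng G (seg (sh m x) q t) \<and> cmp G (seg (sh m x) p q) (seg (sh m x) q t) = seg (sh m x) p t"
  proof (intro allI impI)
    fix p q t assume h: "p \<le> q \<and> q \<le> t \<and> ofn t \<le> dg (sh m x)"
    then have q: "ofn q \<le> dg (sh m x)" using order_trans[OF ofn_mono[of q t]] by blast
    have a: "padd p m \<le> padd q m" "padd q m \<le> padd t m" "ofn (padd t m) \<le> dg x" using h iff padd_mono by auto
    have d1: "seg (sh m x) p q = seg x (padd p m) (padd q m)" using h q by (simp add: seg_sh)
    have d2: "seg (sh m x) q t = seg x (padd q m) (padd t m)" using h by (simp add: seg_sh)
    have d3: "seg (sh m x) p t = seg x (padd p m) (padd t m)" using h order_trans[of p q t] by (simp add: seg_sh)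
    show "src G (seg (sh m x) p q) = rng G (seg (sh m x) q t) \<and>
       cmp G (seg (sh m x) p q) (seg (sh m x) q t) = seg (sh m x) p t"
      using gm_comp[OF x a] d1 d2 d3 by simp
  qed
  show ?thesis unfolding is_gmor_def by (intro conjI f1 f2 f3 f4)
qed

lemma sh_bpath:
  assumes x: "is_bpath G x" and m: "ofn m \<le> dg x"
  shows "is_bpath G (sh m x)"
proof -
  have xg: "is_gmor G x" using x[unfolded is_bpath_def, THEN conjunct1] .
  have "\<exists>nx. ofn nx \<le> dg x \<and>
        (\<forall>p i. nx \<le> p \<and> ofn p \<le> dg x \<and> enat (p i) = dg x i \<longrightarrow>
           \<not> (\<exists>l\<in>mor G. rng G l = vtx G x p \<and> deg G l = ev i))"
    using x[unfolded is_bpath_def, THEN conjunct2] .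
  then obtain nx where nx1: "ofn nx \<le> dg x" and nx2: "\<forall>p i. nx \<le> p \<and> ofn p \<le> dg x \<and> enat (p i) = dg x i \<longrightarrow>
           \<not> (\<exists>l\<in>mor G. rng G l = vtx G x p \<and> deg G l = ev i)"
    by blast
  have iff: "\<And>b. ofn b \<le> dg (sh m x) \<longleftrightarrow> ofn (padd b m) \<le> dg x"
    using ofn_sh_iff[OF m] unfolding dg_sh by blast
  have "ofn (padd (psub nx m) m) \<le> dg x"
  proof -
    have "\<And>i. enat (nx i - m i + m i) \<le> dg x i"
    proof -
      fix i
      have "enat (nx i) \<le> dg x i" "enat (m i) \<le> dg x i" using nx1 m by (auto simp: ofn_def le_fun_def)
      then show "enat (nx i - m i + m i) \<le> dg x i"
        by (cases "nx i \<le> m i") auto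
    qed
    then show ?thesis by (auto simp: ofn_def le_fun_def padd_def psub_def)
  qed
  then have A: "ofn (psub nx m) \<le> dg (sh m x)" using iff by blast
  have B: "\<forall>p i. psub nx m \<le> p \<and> ofn p \<le> dg (sh m x) \<and> enat (p i) = dg (sh m x) i \<longrightarrow>
           \<not> (\<exists>l\<in>mor G. rng G l = vtx G (sh m x) p \<and> deg G l = ev i)"
  proof (intro allI impI)
    fix p i assume h: "psub nx m \<le> p \<and> ofn p \<le> dg (sh m x) \<and> enat (p i) = dg (sh m x) i"
    have a: "nx \<le> padd p m"
    proof -
      have "\<And>j. nx j - m j \<le> p j" using h by (auto simp: le_fun_def psub_def)
      then have "\<And>j. nx j \<le> p j + m j" by (metis le_diff_conv)
      then show ?thesis by (auto simp: le_fun_def padd_def)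
    qed
    have b: "ofn (padd p m) \<le> dg x" using h iff by blast
    have mi: "enat (m i) \<le> dg x i" using m by (auto simp: ofn_def le_fun_def)
    have h3: "enat (p i) = dg x i - enat (m i)" using h unfolding dg_sh by simp
    have c: "enat (padd p m i) = dg x i" using h3 mi unfolding padd_def
      by (cases "dg x i") auto
    have "vtx G (sh m x) p = vtx G x (padd p m)" using h by (simp add: vtx_sh)
    then show "\<not> (\<exists>l\<in>mor G. rng G l = vtx G (sh m x) p \<and> deg G l = ev i)"
      using nx2 a b c by metis
  qed
  show ?thesis unfolding is_bpath_def
    by (intro conjI sh_gmor[OF xg m] exI[of _ "psub nx m"] A B)
qed

lemma enat_add_sub: "(enat a + d) - enat a = d" by (cases d) auto
lemma ofn_zero[simp]: "ofn (\<lambda>_. 0) \<le> D" by (auto simp: ofn_def le_fun_def zero_enat_def[symmetric])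

definition dgc :: "'m \<Rightarrow> ('k, 'm) gpath \<Rightarrow> 'k \<Rightarrow> enat" where
  "dgc l y = (\<lambda>i. enat (deg G l i) + dg y i)"
definition WW :: "'m \<Rightarrow> ('k, 'm) gpath \<Rightarrow> ('k \<Rightarrow> nat) \<Rightarrow> 'm" where
  "WW l y Q = cmp G l (seg y (\<lambda>_. 0) (psub Q (deg G l)))"
definition cz :: "'m \<Rightarrow> ('k, 'm) gpath \<Rightarrow> ('k, 'm) gpath" where
  "cz l y = (dgc l y, \<lambda>(p, q). if p \<le> q \<and> ofn q \<le> dgc l y then pseg (WW l y (sup q (deg G l))) p q else undefined)"

lemma dg_cz: "dg (cz l y) = dgc l y" by (simp add: cz_def dg_def)
lemma seg_cz: "seg (cz l y) p q = (if p \<le> q \<and> ofn q \<le> dgc l y then pseg (WW l y (sup q (deg G l))) p q else undefined)"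
  by (simp add: cz_def seg_def)

lemma dom_sub: "deg G l \<le> Q \<Longrightarrow> ofn Q \<le> dgc l y \<Longrightarrow> ofn (psub Q (deg G l)) \<le> dg y"
proof -
  assume a: "deg G l \<le> Q" "ofn Q \<le> dgc l y"
  have "\<And>i. enat (Q i - deg G l i) \<le> dg y i"
  proof -
    fix i
    have "enat (Q i) \<le> enat (deg G l i) + dg y i" "deg G l i \<le> Q i"
      using a by (auto simp: ofn_def dgc_def le_fun_def)
    then show "enat (Q i - deg G l i) \<le> dg y i" by (cases "dg y i") auto
  qed
  then show ?thesis by (auto simp: ofn_def psub_def le_fun_def)
qed

lemma dom_sup: "ofn q \<le> dgc l y \<Longrightarrow> ofn (sup q (deg G l)) \<le> dgc l y"
proof -
  assume a: "ofn q \<le> dgc l y"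
  have "\<And>i. enat (max (q i) (deg G l i)) \<le> enat (deg G l i) + dg y i"
  proof -
    fix i
    have "enat (q i) \<le> enat (deg G l i) + dg y i"
      using a by (auto simp: ofn_def dgc_def le_fun_def)
    then show "enat (max (q i) (deg G l i)) \<le> enat (deg G l i) + dg y i" by (cases "dg y i") auto
  qed
  then show ?thesis by (auto simp: ofn_def dgc_def le_fun_def sup_fun_def sup_nat_def)
qed

context
  fixes l and y :: "('k, 'm) gpath"
  assumes l: "l \<in> mor G" and y: "is_gmor G y" and ly: "vtx G y (\<lambda>_. 0) = src G l"
begin

lemma WW_mor: "deg G l \<le> Q \<Longrightarrow> ofn Q \<le> dgc l y \<Longrightarrow> WW l y Q \<in> mor G \<and> deg G (WW l y Q) = Q"
proof -
  assume a: "deg G l \<le> Q" "ofn Q \<le> dgc l y"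
  have d: "ofn (psub Q (deg G l)) \<le> dg y" using dom_sub[OF a] .
  have m: "seg y (\<lambda>_. 0) (psub Q (deg G l)) \<in> mor G" "deg G (seg y (\<lambda>_. 0) (psub Q (deg G l))) = psub Q (deg G l)"
    using gm_mor[OF y _ d] by auto
  have r: "rng G (seg y (\<lambda>_. 0) (psub Q (deg G l))) = src G l" using gm_rng[OF y _ d] ly by simp
  show ?thesis unfolding WW_def using l m r padd_psub[OF a(1)] by simp
qed

lemma WW_ext:
  assumes a: "deg G l \<le> Q1" "Q1 \<le> Q2" "ofn Q2 \<le> dgc l y" and pq: "p \<le> q" "q \<le> Q1"
  shows "pseg (WW l y Q2) p q = pseg (WW l y Q1) p q"
proof -
  define a1 where "a1 = psub Q1 (deg G l)"
  define a2 where "a2 = psub Q2 (deg G l)"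
  have a12: "a1 \<le> a2" using a unfolding a1_def a2_def by (auto simp: le_fun_def psub_def intro: diff_le_mono)
  have l2: "deg G l \<le> Q2" using a by auto
  have d2: "ofn a2 \<le> dg y" using dom_sub[OF l2 a(3)] a2_def by simp
  have d1: "ofn a1 \<le> dg y" using order_trans[OF ofn_mono[OF a12] d2] .
  have c: "src G (seg y (\<lambda>_. 0) a1) = rng G (seg y a1 a2) \<and> cmp G (seg y (\<lambda>_. 0) a1) (seg y a1 a2) = seg y (\<lambda>_. 0) a2"
    using gm_comp[OF y _ a12 d2] by simp
  have m1: "seg y (\<lambda>_. 0) a1 \<in> mor G" using gm_mor[OF y _ d1] by simp
  have m2: "seg y a1 a2 \<in> mor G" using gm_mor[OF y a12 d2] by simp
  have r: "rng G (seg y (\<lambda>_. 0) a1) = src G l" using gm_rng[OF y _ d1] ly by simp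
  have e: "WW l y Q2 = cmp G (WW l y Q1) (seg y a1 a2)"
    unfolding WW_def a1_def[symmetric] a2_def[symmetric]
    using assoc[of l "seg y (\<lambda>_. 0) a1" "seg y a1 a2"] l m1 m2 c r by simp
  have l1: "ofn Q1 \<le> dgc l y" using order_trans[OF ofn_mono[OF a(2)] a(3)] .
  have w1: "WW l y Q1 \<in> mor G" "deg G (WW l y Q1) = Q1" using WW_mor[OF a(1) l1] by auto
  have s: "src G (WW l y Q1) = rng G (seg y a1 a2)"
    unfolding WW_def a1_def[symmetric] using l m1 r c by simp
  show ?thesis using e pseg_ext[OF w1(1) m2 s pq(1)] pq(2) w1(2) by simp
qed

lemma cz_seg:
  assumes "sup q (deg G l) \<le> Q" "ofn Q \<le> dgc l y" "p \<le> q"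
  shows "seg (cz l y) p q = pseg (WW l y Q) p q"
proof -
  have q: "q \<le> Q" using assms(1) by (auto simp: le_fun_def sup_fun_def)
  have qd: "ofn q \<le> dgc l y" using order_trans[OF ofn_mono[OF q] assms(2)] .
  have "seg (cz l y) p q = pseg (WW l y (sup q (deg G l))) p q" using qd assms(3) by (simp add: seg_cz)
  also have "\<dots> = pseg (WW l y Q) p q"
    by (rule WW_ext[symmetric]) (use assms in auto)
  finally show ?thesis .
qed

lemma cz_gmor: "is_gmor G (cz l y)"
proof -
  have f1: "\<forall>p q. \<not> (p \<le> q \<and> ofn q \<le> dg (cz l y)) \<longrightarrow> seg (cz l y) p q = undefined"
    by (metis seg_cz dg_cz)
  have f2: "\<forall>p q. p \<le> q \<and> ofn q \<le> dg (cz l y) \<longrightarrow> seg (cz l y) p q \<in> mor G \<and> deg G (seg (cz l y) p q) = psub q p"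
  proof (intro allI impI)
    fix p q assume h: "p \<le> q \<and> ofn q \<le> dg (cz l y)"
    have e: "seg (cz l y) p q = pseg (WW l y (sup q (deg G l))) p q" using h by (simp add: seg_cz dg_cz)
    have w: "WW l y (sup q (deg G l)) \<in> mor G" "deg G (WW l y (sup q (deg G l))) = sup q (deg G l)"
      using WW_mor[of "sup q (deg G l)"] dom_sup h dg_cz by auto
    show "seg (cz l y) p q \<in> mor G \<and> deg G (seg (cz l y) p q) = psub q p"
      using pseg_mor[OF w(1), of p q] h w(2) e by simp
  qed
  have f3: "\<forall>p. ofn p \<le> dg (cz l y) \<longrightarrow> seg (cz l y) p p = ident G (vtx G (cz l y) p)"
  proof (intro allI impI)
    fix p assume h: "ofn p \<le> dg (cz l y)"
    have e: "seg (cz l y) p p = pseg (WW l y (sup p (deg G l))) p p" using h by (simp add: seg_cz dg_cz)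
    have w: "WW l y (sup p (deg G l)) \<in> mor G" "deg G (WW l y (sup p (deg G l))) = sup p (deg G l)"
      using WW_mor[of "sup p (deg G l)"] dom_sup h dg_cz by auto
    show "seg (cz l y) p p = ident G (vtx G (cz l y) p)"
      unfolding vtx_def using pseg_idn[OF w(1), of p] w(2) e by simp
  qed
  have f4: "\<forall>p q t. p \<le> q \<and> q \<le> t \<and> ofn t \<le> dg (cz l y) \<longrightarrow>
        src G (seg (cz l y) p q) = rng G (seg (cz l y) q t) \<and> cmp G (seg (cz l y) p q) (seg (cz l y) q t) = seg (cz l y) p t"
  proof (intro allI impI)
    fix p q t assume h: "p \<le> q \<and> q \<le> t \<and> ofn t \<le> dg (cz l y)"
    define Q where "Q = sup t (deg G l)"
    have Qd: "ofn Q \<le> dgc l y" using dom_sup h dg_cz Q_def by auto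
    have w: "WW l y Q \<in> mor G" "deg G (WW l y Q) = Q"
      using WW_mor[of Q] Qd Q_def by auto
    have tq: "t \<le> Q" unfolding Q_def by simp
    have sq: "sup q (deg G l) \<le> Q" "sup t (deg G l) \<le> Q" unfolding Q_def using h by (auto intro: sup_mono le_supI1)
    have s1: "seg (cz l y) p q = pseg (WW l y Q) p q"
      by (rule cz_seg) (use h Qd Q_def sq in auto)
    have s2: "seg (cz l y) q t = pseg (WW l y Q) q t"
      by (rule cz_seg) (use h Qd Q_def sq in auto)
    have s3: "seg (cz l y) p t = pseg (WW l y Q) p t"
      by (rule cz_seg) (use h Qd Q_def sq in auto)
    show "src G (seg (cz l y) p q) = rng G (seg (cz l y) q t) \<and>
        cmp G (seg (cz l y) p q) (seg (cz l y) q t) = seg (cz l y) p t"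
      using pseg_comp[OF w(1), of p q t] h tq w(2) s1 s2 s3 by simp
  qed
  show ?thesis unfolding is_gmor_def by (intro conjI f1 f2 f3 f4)
qed

lemma Ld: "ofn (deg G l) \<le> dgc l y" by (auto simp: ofn_def dgc_def le_fun_def)

lemma cz_first: "seg (cz l y) (\<lambda>_. 0) (deg G l) = l"
proof -
  have "seg (cz l y) (\<lambda>_. 0) (deg G l) = pseg (WW l y (deg G l)) (\<lambda>_. 0) (deg G l)"
    by (rule cz_seg) (use Ld in auto)
  moreover have "WW l y (deg G l) = l"
  proof -
    have "seg y (\<lambda>_. 0) (\<lambda>_. 0) = ident G (src G l)" using gm_id[OF y ofn_zero] ly by simp
    then show ?thesis unfolding WW_def using idr[OF l] by simp
  qed
  ultimately show ?thesis using pseg_full[OF l] by simp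
qed

lemma dg_sh_cz: "dg (sh (deg G l) (cz l y)) = dg y"
  by (simp add: dg_sh dg_cz dgc_def enat_add_sub)

lemma cz_sh: "sh (deg G l) (cz l y) = y"
proof (rule prod_eqI)
  show "fst (sh (deg G l) (cz l y)) = fst y" using dg_sh_cz by (simp add: dg_def)
  show "snd (sh (deg G l) (cz l y)) = snd y"
  proof (rule ext, clarify)
    fix a b
    show "snd (sh (deg G l) (cz l y)) (a, b) = snd y (a, b)"
    proof (cases "a \<le> b \<and> ofn b \<le> dg y")
      case True
      have d: "ofn (padd b (deg G l)) \<le> dgc l y"
      proof -
        have "\<And>i. enat (b i + deg G l i) \<le> enat (deg G l i) + dg y i"
        proof -
          fix i have "enat (b i) \<le> dg y i" using True by (auto simp: ofn_def le_fun_def)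
          then show "enat (b i + deg G l i) \<le> enat (deg G l i) + dg y i" by (cases "dg y i") auto
        qed
        then show ?thesis by (auto simp: ofn_def dgc_def le_fun_def padd_def)
      qed
      have "snd (sh (deg G l) (cz l y)) (a, b) = seg (cz l y) (padd a (deg G l)) (padd b (deg G l))"
        using True dg_sh_cz seg_sh[of "deg G l" "cz l y" a b] by (simp add: seg_def)
      also have "\<dots> = pseg (WW l y (padd b (deg G l))) (padd a (deg G l)) (padd b (deg G l))"
        by (rule cz_seg) (use d True padd_mono in \<open>auto simp: le_fun_def padd_def\<close>)
      also have "WW l y (padd b (deg G l)) = cmp G l (seg y (\<lambda>_. 0) b)"
        unfolding WW_def by (simp add: psub_def padd_def)
      also have "pseg (cmp G l (seg y (\<lambda>_. 0) b)) (padd a (deg G l)) (padd b (deg G l)) = pseg (seg y (\<lambda>_. 0) b) a b"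
      proof (rule pseg_shift[OF l])
        show "seg y (\<lambda>_. 0) b \<in> mor G" using gm_mor[OF y _ ] True by simp
        show "src G l = rng G (seg y (\<lambda>_. 0) b)" using gm_rng[OF y _] True ly by simp
        show "a \<le> b" using True by simp
        show "b \<le> deg G (seg y (\<lambda>_. 0) b)" using gm_mor[OF y _ ] True by simp
      qed
      also have "\<dots> = seg y a b" using gseg[OF y _ order_refl] True by simp
      finally show ?thesis by (simp add: seg_def)
    next
      case False
      have "seg (sh (deg G l) (cz l y)) a b = undefined"
        unfolding seg_sh[of "deg G l" "cz l y" a b] dg_sh_cz using False by (rule if_not_P)
      then have "snd (sh (deg G l) (cz l y)) (a, b) = undefined" by (simp add: seg_def)
      moreover have "seg y a b = undefined" using gm_undef[OF y False] .
      ultimately show ?thesis by (simp add: seg_def)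
    qed
  qed
qed

lemma cz_uniq:
  assumes z: "is_gmor G z" "dg z = (\<lambda>i. enat (deg G l i) + dg y i)" "seg z (\<lambda>_. 0) (deg G l) = l"
     "sh (deg G l) z = y"
  shows "z = cz l y"
proof (rule prod_eqI)
  have dz: "dg z = dgc l y" using z(2) by (simp add: dgc_def)
  show "fst z = fst (cz l y)" using dz dg_cz by (simp add: dg_def)
  have dsh: "dg (sh (deg G l) z) = dg y" using z(4) by simp
  show "snd z = snd (cz l y)"
  proof (rule ext, clarify)
    fix p q
    show "snd z (p, q) = snd (cz l y) (p, q)"
    proof (cases "p \<le> q \<and> ofn q \<le> dgc l y")
      case True
      define Q where "Q = sup q (deg G l)"
      have Qd: "ofn Q \<le> dgc l y" using dom_sup True Q_def by auto
      have qQ: "q \<le> Q" "deg G l \<le> Q" unfolding Q_def by auto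
      have e1: "seg (cz l y) p q = pseg (WW l y Q) p q"
        by (rule cz_seg) (use Qd True Q_def in auto)
      have e2: "seg z p q = pseg (seg z (\<lambda>_. 0) Q) p q"
        using gseg[OF z(1) _ qQ(1)] True Qd dz by simp
      define Q' where "Q' = psub Q (deg G l)"
      have Q'd: "ofn Q' \<le> dg y" using dom_sub[OF qQ(2) Qd] Q'_def by simp
      have pQ: "padd Q' (deg G l) = Q" using padd_psub[OF qQ(2)] padd_comm Q'_def by metis
      have "seg y (\<lambda>_. 0) Q' = seg (sh (deg G l) z) (\<lambda>_. 0) Q'" using z(4) by simp
      also have "\<dots> = seg z (deg G l) Q" using seg_sh[of "deg G l" z "\<lambda>_. 0" Q'] dsh Q'd pQ by simp
      finally have e3: "seg y (\<lambda>_. 0) Q' = seg z (deg G l) Q" .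
      have e4: "seg z (\<lambda>_. 0) Q = cmp G l (seg z (deg G l) Q)"
        using gm_comp[OF z(1) zero_le qQ(2) Qd[folded dz]] z(3) by simp
      have "seg z (\<lambda>_. 0) Q = WW l y Q" unfolding WW_def using e3 e4 Q'_def by simp
      then show ?thesis using e1 e2 by (simp add: seg_def)
    next
      case False
      have "seg z p q = undefined" using gm_undef[OF z(1)] False dz by simp
      moreover have "seg (cz l y) p q = undefined" unfolding seg_cz using False by (rule if_not_P)
      ultimately show ?thesis by (simp add: seg_def)
    qed
  qed
qed

lemma concat_eq: "concat G l y = cz l y"
  unfolding concat_def
proof (rule the_equality)
  show "is_gmor G (cz l y) \<and> dg (cz l y) = (\<lambda>i. enat (deg G l i) + dg y i) \<and>
    seg (cz l y) (\<lambda>_. 0) (deg G l) = l \<and> sh (deg G l) (cz l y) = y"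
    using cz_gmor cz_first cz_sh dg_cz by (simp add: dgc_def)
  show "\<And>z. is_gmor G z \<and> dg z = (\<lambda>i. enat (deg G l i) + dg y i) \<and> seg z (\<lambda>_. 0) (deg G l) = l \<and> sh (deg G l) z = y \<Longrightarrow>
         z = cz l y"
    using cz_uniq by blast
qed

lemma concat_props: "is_gmor G (concat G l y) \<and> dg (concat G l y) = (\<lambda>i. enat (deg G l i) + dg y i)
   \<and> sh (deg G l) (concat G l y) = y"
  using concat_eq cz_gmor cz_sh dg_cz by (simp add: dgc_def)


lemma concat_bpath:
  assumes yb: "is_bpath G y"
  shows "is_bpath G (concat G l y)"
proof -
  define z where "z = concat G l y"
  have zg: "is_gmor G z" and dz: "dg z = dgc l y" and shz: "sh (deg G l) z = y"
    using concat_props unfolding z_def dgc_def by auto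
  have "\<exists>nx. ofn nx \<le> dg y \<and>
        (\<forall>p i. nx \<le> p \<and> ofn p \<le> dg y \<and> enat (p i) = dg y i \<longrightarrow>
           \<not> (\<exists>l\<in>mor G. rng G l = vtx G y p \<and> deg G l = ev i))"
    using yb[unfolded is_bpath_def, THEN conjunct2] .
  then obtain ny where ny1: "ofn ny \<le> dg y" and ny2: "\<forall>p i. ny \<le> p \<and> ofn p \<le> dg y \<and> enat (p i) = dg y i \<longrightarrow>
           \<not> (\<exists>l\<in>mor G. rng G l = vtx G y p \<and> deg G l = ev i)"
    by blast
  have A: "ofn (padd ny (deg G l)) \<le> dg z"
  proof -
    have "\<And>i. enat (ny i + deg G l i) \<le> enat (deg G l i) + dg y i"
    proof -
      fix i have "enat (ny i) \<le> dg y i" using ny1 by (auto simp: ofn_def le_fun_def)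
      then show "enat (ny i + deg G l i) \<le> enat (deg G l i) + dg y i" by (cases "dg y i") auto
    qed
    then show ?thesis unfolding dz by (auto simp: ofn_def dgc_def le_fun_def padd_def)
  qed
  have B: "\<forall>p i. padd ny (deg G l) \<le> p \<and> ofn p \<le> dg z \<and> enat (p i) = dg z i \<longrightarrow>
           \<not> (\<exists>e\<in>mor G. rng G e = vtx G z p \<and> deg G e = ev i)"
  proof (intro allI impI)
    fix p i assume h: "padd ny (deg G l) \<le> p \<and> ofn p \<le> dg z \<and> enat (p i) = dg z i"
    define p' where "p' = psub p (deg G l)"
    have Lp: "deg G l \<le> p"
    proof -
      have "\<And>j. ny j + deg G l j \<le> p j" using h by (auto simp: le_fun_def padd_def)
      then show ?thesis unfolding le_fun_def using add_leD2 by blast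
    qed
    have pp: "padd p' (deg G l) = p" using padd_psub[OF Lp] padd_comm p'_def by metis
    have a: "ny \<le> p'"
    proof -
      have "\<And>j. ny j + deg G l j \<le> p j" using h by (auto simp: le_fun_def padd_def)
      then have "\<And>j. ny j \<le> p j - deg G l j" by (metis diff_add_inverse2 diff_le_mono)
      then show ?thesis unfolding p'_def by (auto simp: le_fun_def psub_def)
    qed
    have b: "ofn p' \<le> dg y" using dom_sub[OF Lp] h dz p'_def by simp
    have c: "enat (p' i) = dg y i"
    proof -
      have "enat (p i) = enat (deg G l i) + dg y i" using h dz by (simp add: dgc_def)
      then show ?thesis unfolding p'_def psub_def by (cases "dg y i") auto
    qed
    have dsh: "dg (sh (deg G l) z) = dg y" using shz by simp
    have "vtx G y p' = rng G (seg (sh (deg G l) z) p' p')" using shz by (simp add: vtx_def)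
    also have "\<dots> = vtx G z p" using seg_sh[of "deg G l" z p' p'] dsh b pp by (simp add: vtx_def)
    finally have "vtx G y p' = vtx G z p" .
    then show "\<not> (\<exists>e\<in>mor G. rng G e = vtx G z p \<and> deg G e = ev i)"
      using ny2 a b c by metis
  qed
  show ?thesis unfolding is_bpath_def z_def[symmetric]
    by (intro conjI zg exI[of _ "padd ny (deg G l)"] A B)
qed

end


lemma mn_zero: "mn (\<lambda>_. 0) D = (\<lambda>_. 0)"
proof -
  have "\<And>x. the_enat (min (enat 0) (D x)) = 0"
    by (case_tac "D x") auto
  then show ?thesis by (simp add: mn_def fun_eq_iff)
qed

lemma mn_le: "ofn (mn n D) \<le> D"
proof -
  have "\<And>i. enat (the_enat (min (enat (n i)) (D i))) \<le> D i"
    by (case_tac "D i") (auto simp: min_def)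
  then show ?thesis by (auto simp: ofn_def mn_def le_fun_def)
qed

lemma final_contra:
  assumes z: "is_gmor G z" and z': "is_gmor G z'"
    and dl: "\<forall>i. enat (dl i) \<le> dg z i" and du: "\<forall>i. enat (du i) \<le> dg z' i"
    and nd: "\<not> ofn (sup dl du) \<le> dg z"
    and eq: "seg z (mn (\<lambda>_. 0) (dg z)) (mn (sup dl du) (dg z)) = seg z' (mn (\<lambda>_. 0) (dg z')) (mn (sup dl du) (dg z'))"
  shows False
proof -
  define D where "D = sup dl du"
  have k1: "deg G (seg z (\<lambda>_. 0) (mn D (dg z))) = mn D (dg z)"
    using gm_mor[OF z zero_le mn_le] by simp
  have k2: "deg G (seg z' (\<lambda>_. 0) (mn D (dg z'))) = mn D (dg z')"
    using gm_mor[OF z' zero_le mn_le] by simp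
  have K: "mn D (dg z) = mn D (dg z')" using eq k1 k2 unfolding D_def mn_zero by metis
  obtain i where i: "\<not> enat (D i) \<le> dg z i" using nd unfolding D_def ofn_def le_fun_def by auto
  have Ki: "the_enat (min (enat (D i)) (dg z i)) = the_enat (min (enat (D i)) (dg z' i))"
    using K unfolding mn_def by metis
  have Di: "D i = max (dl i) (du i)" unfolding D_def by (simp add: sup_fun_def sup_nat_def)
  have a: "enat (dl i) \<le> dg z i" "enat (du i) \<le> dg z' i" using dl du by auto
  show False
  proof (cases "dg z i")
    case (enat c)
    then have c: "c < D i" "dl i \<le> c" using i a by auto
    show False
    proof (cases "dg z' i")
      case (enat c')
      then show False using Ki c a \<open>dg z i = enat c\<close> Di by (auto simp: min_def split: if_splits)
    next
      case infinity
      then show False using Ki c \<open>dg z i = enat c\<close> by (auto simp: min_def)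
    qed
  next
    case infinity
    then show False using i by simp
  qed
qed

lemma side:
  assumes l: "l \<in> mor G" and C: "C \<in> Pt G" and r: "rng (ext G) (Inr C) = Inl (src G l)"
  shows "\<exists>z N. cmp (ext G) (Inl l) (Inr C) = Inr (classP G z (\<lambda>_. 0) N) \<and> (z, \<lambda>_. 0, N) \<in> Pset G
     \<and> is_gmor G z \<and> (\<forall>i. enat (deg G l i) \<le> dg z i)"
proof -
  obtain x0 m0 n0 where C0: "C = classP G x0 m0 n0" "(x0, m0, n0) \<in> Pset G"
    using C unfolding Pt_def by blast
  have "(x0, m0, n0) \<in> C" using C0 by (simp add: classP_def)
  then have rC: "rep C \<in> C" unfolding rep_def by (rule someI)
  obtain x m n where rx: "rep C = (x, m, n)" by (cases "rep C") auto
  have "(x, m, n) \<in> Pset G" using rC rx C0(1) by (simp add: classP_def)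
  then have xb: "is_bpath G x" and mn: "m \<le> n" and nx: "\<not> ofn n \<le> dg x" by (auto simp: Pset_def)
  have xg: "is_gmor G x" using xb is_bpath_def by blast
  have "(if ofn m \<le> dg x then Inl (vtx G x m) else Inr (classV G x m)) = (Inl (src G l) :: 'o + _)"
    using r rx by (simp add: ext_def)
  then have md: "ofn m \<le> dg x" and vm: "vtx G x m = src G l" by (auto split: if_splits)
  have cm: "cmp (ext G) (Inl l) (Inr C) = Inr (classP G (concat G l (sh m x)) (\<lambda>_. 0) (psub (padd (deg G l) n) m))"
    using rx by (simp add: ext_def)
  define y where "y = sh m x"
  have yb: "is_bpath G y" using sh_bpath[OF xb md] y_def by simp
  have yg: "is_gmor G y" using sh_gmor[OF xg md] y_def by simp
  have ly: "vtx G y (\<lambda>_. 0) = src G l" using vm md unfolding y_def by (simp add: vtx_sh dg_sh[symmetric])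
  define z where "z = concat G l y"
  have zp: "is_gmor G z" "dg z = (\<lambda>i. enat (deg G l i) + dg y i)"
    using concat_props[OF l yg ly] z_def by auto
  have zb: "is_bpath G z" using concat_bpath[OF l yg ly yb] z_def by simp
  define N where "N = psub (padd (deg G l) n) m"
  have "\<not> ofn N \<le> dg z"
  proof
    assume h: "ofn N \<le> dg z"
    obtain i where i: "\<not> enat (n i) \<le> dg x i" using nx unfolding ofn_def le_fun_def by auto
    have mi: "enat (m i) \<le> dg x i" "m i \<le> n i" using md mn by (auto simp: ofn_def le_fun_def)
    have hi: "enat (N i) \<le> dg z i" using h by (auto simp: ofn_def le_fun_def)
    show False
    proof (cases "dg x i")
      case (enat c)
      then show False using i mi hi zp(2) unfolding y_def dg_sh N_def psub_def padd_def by auto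
    next
      case infinity then show False using i by simp
    qed
  qed
  then have "(z, \<lambda>_. 0, N) \<in> Pset G" using zb by (simp add: Pset_def)
  moreover have "\<forall>i. enat (deg G l i) \<le> dg z i" using zp(2) by (simp add: le_iff_add)
  ultimately show ?thesis using cm zp(1) z_def y_def N_def by blast
qed


lemma main:
  assumes l: "l \<in> mor G" and u: "u \<in> mor G"
  shows "kmin (ext G) (Inl l) (Inl u) = map_prod Inl Inl ` kmin G l u"
proof (rule equalityI)
  show "map_prod Inl Inl ` kmin G l u \<subseteq> kmin (ext G) (Inl l) (Inl u)"
    by (auto simp: kmin_def ext_def)
next
  show "kmin (ext G) (Inl l) (Inl u) \<subseteq> map_prod Inl Inl ` kmin G l u"
  proof (clarify)
    fix a b assume h: "(a, b) \<in> kmin (ext G) (Inl l) (Inl u)"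
    then have am: "a \<in> mor (ext G)" and bm: "b \<in> mor (ext G)"
      and sa: "Inl (src G l) = rng (ext G) a" and sb: "Inl (src G u) = rng (ext G) b"
      and ce: "cmp (ext G) (Inl l) a = cmp (ext G) (Inl u) b"
      and de: "deg (ext G) (cmp (ext G) (Inl l) a) = sup (deg G l) (deg G u)"
      by (auto simp: kmin_def ext_def)
    show "(a, b) \<in> map_prod Inl Inl ` kmin G l u"
    proof (cases a)
      case (Inl a')
      note a' = Inl
      show ?thesis
      proof (cases b)
        case (Inl b')
        have "(a', b') \<in> kmin G l u" using h a' Inl by (auto simp: kmin_def ext_def)
        then show ?thesis using a' Inl by force
      next
        case (Inr D)
        obtain x m n where rx: "rep D = (x, m, n)" by (cases "rep D") auto
        show ?thesis using ce a' Inr rx by (simp add: ext_def)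
      qed
    next
      case (Inr C)
      note a' = Inr
      show ?thesis
      proof (cases b)
        case (Inl b')
        obtain x m n where rx: "rep C = (x, m, n)" by (cases "rep C") auto
        show ?thesis using ce a' Inl rx by (simp add: ext_def)
      next
        case (Inr D)
        have C: "C \<in> Pt G" using am a' by (auto simp: ext_def)
        have D: "D \<in> Pt G" using bm Inr by (auto simp: ext_def)
        obtain z N where z: "cmp (ext G) (Inl l) (Inr C) = Inr (classP G z (\<lambda>_. 0) N)"
          "(z, \<lambda>_. 0, N) \<in> Pset G" "is_gmor G z" "\<forall>i. enat (deg G l i) \<le> dg z i"
          using side[OF l C] sa a' by metis
        obtain z' N' where z': "cmp (ext G) (Inl u) (Inr D) = Inr (classP G z' (\<lambda>_. 0) N')"
          "(z', \<lambda>_. 0, N') \<in> Pset G" "is_gmor G z'" "\<forall>i. enat (deg G u i) \<le> dg z' i"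
          using side[OF u D] sb Inr by metis
        define E where "E = classP G z (\<lambda>_. 0) N"
        have E': "E = classP G z' (\<lambda>_. 0) N'" using ce a' Inr z z' E_def by simp
        have "(z, \<lambda>_. 0, N) \<in> E" using z(2) E_def by (simp add: classP_def)
        then have rE: "rep E \<in> E" unfolding rep_def by (rule someI)
        obtain y p q where ry: "rep E = (y, p, q)" by (cases "rep E") auto
        have e1: "seg z (mn (\<lambda>_. 0) (dg z)) (mn N (dg z)) = seg y (mn p (dg y)) (mn q (dg y))"
          "psub N (\<lambda>_. 0) = psub q p"
          using rE ry E_def by (auto simp: classP_def)
        have e2: "seg z' (mn (\<lambda>_. 0) (dg z')) (mn N' (dg z')) = seg y (mn p (dg y)) (mn q (dg y))"
          "psub N' (\<lambda>_. 0) = psub q p"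
          using rE ry E' by (auto simp: classP_def)
        have "deg (ext G) (Inr E) = psub q p" using ry by (simp add: ext_def)
        then have dq: "psub q p = sup (deg G l) (deg G u)" using de z(1) a' E_def by simp
        have NN: "N = sup (deg G l) (deg G u)" "N' = sup (deg G l) (deg G u)" using e1(2) e2(2) dq by auto
        have nd: "\<not> ofn N \<le> dg z" using z(2) by (simp add: Pset_def)
        show ?thesis
          using final_contra[OF z(3) z'(3) z(4) z'(4)] nd e1(1) e2(1) NN by simp
      qed
    qed
  qed
qed

end

theorem lemma3p25:
  fixes G :: "('o, 'm, 'k::finite) kgraph" and l u :: 'm
  assumes "is_kgraph G" and "finitely_aligned G"
    and "l \<in> mor G" and "u \<in> mor G"
  shows "kmin (ext G) (Inl l) (Inl u) = map_prod Inl Inl ` kmin G l u"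
proof -
  interpret kg G by (rule kg.intro) (rule assms(1))
  show ?thesis by (rule main[OF assms(3) assms(4)])
qed

end
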